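(* Let $\mathcal{A}$ be a unital Banach algebra, let $a, b_n \in \mathcal{A}$ ($n \ge 1$) with $a = \lim_n b_n$ in norm, and suppose that for each $n \ge 1$ every connected component of $\sigma(b_n)$ intersects $\sigma(-b_n)$. Then every connected component of $\sigma(a)$ intersects $\sigma(-a)$. *)

theory Defs
  imports "HOL-Analysis.Analysis"
begin

class complex_banach_algebra = real_normed_algebra_1 + banach +
  fixes scaleC :: "complex \<Rightarrow> 'a \<Rightarrow> 'a"
  assumes scaleC_add_right: "scaleC c (x + y) = scaleC c x + scaleC c y"
    and scaleC_add_left: "scaleC (c + d) x = scaleC c x + scaleC d x"
    and scaleC_scaleC: "scaleC c (scaleC d x) = scaleC (c * d) x"
    and scaleC_one: "scaleC 1 x = x"
    and scaleR_scaleC: "scaleR r x = scaleC (complex_of_real r) x"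
    and norm_scaleC: "norm (scaleC c x) = cmod c * norm x"
    and scaleC_mult_left: "scaleC c x * y = scaleC c (x * y)"
    and scaleC_mult_right: "x * scaleC c y = scaleC c (x * y)"

definition invertible_elem :: "'a::ring_1 \<Rightarrow> bool" where
  "invertible_elem x \<longleftrightarrow> (\<exists>y. x * y = 1 \<and> y * x = 1)"

definition spectrum :: "'a::complex_banach_algebra \<Rightarrow> complex set" where
  "spectrum a = {c. \<not> invertible_elem (a - scaleC c 1)}"

end

theory Submission
  imports Defs "HOL-Real_Asymp.Real_Asymp"
begin

definition ce :: "complex \<Rightarrow> 'a::complex_banach_algebra" where "ce c = scaleC c 1"

lemma scaleC_ce: "scaleC c x = ce c * (x::'a::complex_banach_algebra)"
  by (simp add: ce_def scaleC_mult_left)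
lemma ce_comm: "(x::'a::complex_banach_algebra) * ce c = ce c * x"
  by (simp add: ce_def scaleC_mult_left scaleC_mult_right)
lemma ce_mult: "(ce (c*d)::'a::complex_banach_algebra) = ce c * ce d"
  by (simp add: ce_def scaleC_mult_left scaleC_scaleC)
lemma ce_add: "(ce (c+d)::'a::complex_banach_algebra) = ce c + ce d"
  by (simp add: ce_def scaleC_add_left)
lemma ce_zero[simp]: "(ce 0::'a::complex_banach_algebra) = 0"
proof -
  have "(ce 0::'a) = ce 0 + ce 0" using ce_add[of 0 0] by simp
  then show ?thesis by simp
qed
lemma ce_one[simp]: "(ce 1::'a::complex_banach_algebra) = 1"
  by (simp add: ce_def scaleC_one)
lemma ce_minus: "(ce (-c)::'a::complex_banach_algebra) = - ce c"
proof -
  have "ce c + ce (-c) = (0::'a)" using ce_add[of c "-c", where 'a='a] by simp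
  then show ?thesis using minus_unique by metis
qed
lemma ce_diff: "(ce (c-d)::'a::complex_banach_algebra) = ce c - ce d"
  using ce_add[of c "-d", where 'a='a] by (simp add: ce_minus)
lemma norm_ce[simp]: "norm (ce c::'a::complex_banach_algebra) = cmod c"
  by (simp add: ce_def norm_scaleC)
lemma ce_power: "(ce (c^k)::'a::complex_banach_algebra) = ce c ^ k"
  by (induction k) (simp_all add: ce_mult)
lemma ce_sum: "(ce (sum f A)::'a::complex_banach_algebra) = (\<Sum>i\<in>A. ce (f i))"
  by (induction A rule: infinite_finite_induct) (simp_all add: ce_add)
lemma ce_of_nat: "(ce (of_nat n)::'a::complex_banach_algebra) = of_nat n"
  by (induction n) (simp_all add: ce_add)

lemma comm_power_mult: "(a::'a::monoid_mult) * b = b * a \<Longrightarrow> (a * b)^k = a^k * b^k"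
proof (induction k)
  case (Suc k)
  have "(a*b)^Suc k = (a*b)^k * (a * b)" by (rule power_Suc2)
  also have "\<dots> = (a^k * b^k) * (a * b)" using Suc by simp
  also have "\<dots> = a^k * (b^k * a) * b" by (simp add: mult.assoc)
  also have "b^k * a = a * b^k" using power_commuting_commutes[of b a k] Suc.prems by simp
  also have "a^k * (a * b^k) * b = (a^k * a) * (b^k * b)" by (simp add: mult.assoc)
  also have "\<dots> = a^Suc k * b^Suc k" by (simp only: power_Suc2)
  finally show ?case .
qed simp

definition ainv :: "'a::ring_1 \<Rightarrow> 'a" where "ainv x = (THE y. x*y = 1 \<and> y*x = 1)"

lemma ainv_eq: "(x::'a::ring_1) * y = 1 \<Longrightarrow> y * x = 1 \<Longrightarrow> ainv x = y"
  unfolding ainv_def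
proof (rule the_equality)
  fix y' assume "x*y = 1" "y*x = 1" "x*y' = 1 \<and> y'*x = 1"
  then have "y' = (y*x)*y'" by simp
  also have "\<dots> = y*(x*y')" by (simp add: mult.assoc)
  finally show "y' = y" using \<open>x*y' = 1 \<and> y'*x = 1\<close> by simp
qed simp

lemma ainv: "invertible_elem (x::'a::ring_1) \<Longrightarrow> x * ainv x = 1 \<and> ainv x * x = 1"
  unfolding invertible_elem_def using ainv_eq by metis

lemma invertible_elemI: "(x::'a::ring_1) * y = 1 \<Longrightarrow> y * x = 1 \<Longrightarrow> invertible_elem x"
  unfolding invertible_elem_def by blast

lemma neumann:
  fixes u :: "'a::{real_normed_algebra_1, banach}"
  assumes "norm u < 1"
  shows "(1 - u) * (\<Sum>k. u^k) = 1 \<and> (\<Sum>k. u^k) * (1 - u) = 1 \<and> norm (\<Sum>k. u^k) \<le> 1 / (1 - norm u)"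
proof -
  have ng: "norm (u^k) \<le> norm u ^ k" for k by (rule norm_power_ineq)
  have sg: "summable (\<lambda>k. norm u ^ k)" using assms by (simp add: summable_geometric)
  have su: "summable (\<lambda>k. u^k)"
    by (rule summable_comparison_test'[OF sg]) (use ng in auto)
  have p1: "(1 - u) * (\<Sum>k<n. u^k) = 1 - u^n" for n
  proof (induction n)
    case (Suc n)
    have "(1 - u) * (\<Sum>k<Suc n. u^k) = (1 - u) * (\<Sum>k<n. u^k) + (1 - u) * u^n"
      by (simp add: distrib_left)
    also have "\<dots> = 1 - u^n + (u^n - u^Suc n)" using Suc by (simp add: left_diff_distrib power_Suc)
    finally show ?case by simp
  qed simp
  have p2: "(\<Sum>k<n. u^k) * (1 - u) = 1 - u^n" for n
  proof (induction n)
    case (Suc n)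
    have "(\<Sum>k<Suc n. u^k) * (1 - u) = (\<Sum>k<n. u^k) * (1 - u) + u^n * (1 - u)"
      by (simp add: distrib_right)
    also have "\<dots> = 1 - u^n + (u^n - u^Suc n)" using Suc by (simp add: right_diff_distrib power_Suc2 power_commutes)
    finally show ?case by simp
  qed simp
  have lim: "(\<lambda>n. \<Sum>k<n. u^k) \<longlonglongrightarrow> (\<Sum>k. u^k)" using su summable_LIMSEQ by blast
  have l0: "(\<lambda>n. 1 - u^n) \<longlonglongrightarrow> 1 - 0" using assms by (intro tendsto_intros)
  have "(\<lambda>n. (1 - u) * (\<Sum>k<n. u^k)) \<longlonglongrightarrow> (1 - u) * (\<Sum>k. u^k)"
    using lim by (intro tendsto_intros)
  hence e1: "(1 - u) * (\<Sum>k. u^k) = 1" using l0 unfolding p1 using LIMSEQ_unique by fastforce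
  have "(\<lambda>n. (\<Sum>k<n. u^k) * (1 - u)) \<longlonglongrightarrow> (\<Sum>k. u^k) * (1 - u)"
    using lim by (intro tendsto_intros)
  hence e2: "(\<Sum>k. u^k) * (1 - u) = 1" using l0 unfolding p2 using LIMSEQ_unique by fastforce
  have "norm (\<Sum>k. u^k) \<le> (\<Sum>k. norm u ^ k)"
    by (rule norm_suminf_le) (use ng sg in auto)
  also have "\<dots> = 1 / (1 - norm u)" using assms by (simp add: suminf_geometric)
  finally show ?thesis using e1 e2 by blast
qed


lemma pert:
  fixes y R0 h :: "'a::complex_banach_algebra"
  assumes "y * R0 = 1" "R0 * y = 1" "norm h * norm R0 \<le> 1/2"
  shows "invertible_elem (y + h) \<and> norm (ainv (y + h)) \<le> 2 * norm R0"
proof -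
  define u where "u = - (R0 * h)"
  have nu: "norm u \<le> 1/2" unfolding u_def using norm_mult_ineq[of R0 h] assms(3)
    by (simp add: mult.commute)
  define s where "s = (\<Sum>k. u^k)"
  have N: "(1 - u) * s = 1" "s * (1 - u) = 1" "norm s \<le> 1 / (1 - norm u)"
    using neumann[of u] nu unfolding s_def by auto
  have yh: "y + h = y * (1 - u)" unfolding u_def
    by (simp add: distrib_left mult.assoc[symmetric] assms(1))
  have i1: "(y + h) * (s * R0) = 1" unfolding yh
  proof -
    have "y * (1 - u) * (s * R0) = y * ((1 - u) * s) * R0" by (simp only: mult.assoc)
    then show "y * (1 - u) * (s * R0) = 1" using N(1) assms(1) by simp
  qed
  have i2: "(s * R0) * (y + h) = 1" unfolding yh
  proof -
    have "(s * R0) * (y * (1 - u)) = s * (R0 * y) * (1 - u)" by (simp only: mult.assoc)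
    then show "(s * R0) * (y * (1 - u)) = 1" using N(2) assms(2) by simp
  qed
  have "norm s \<le> 2"
  proof -
    have "1 / (1 - norm u) \<le> 2" using nu by (simp add: field_simps)
    then show ?thesis using N(3) by linarith
  qed
  hence "norm (s * R0) \<le> 2 * norm R0"
    using norm_mult_ineq[of s R0] mult_right_mono[OF _ norm_ge_zero[of R0], of "norm s" 2] by linarith
  then show ?thesis using ainv_eq[OF i1 i2] invertible_elemI[OF i1 i2] by simp
qed

lemma spectrum_ce: "c \<in> spectrum x \<longleftrightarrow> \<not> invertible_elem (x - ce c)"
  by (simp add: spectrum_def ce_def)

definition res :: "'a::complex_banach_algebra \<Rightarrow> complex \<Rightarrow> 'a" where
  "res x c = ainv (x - ce c)"

lemma res: "c \<notin> spectrum x \<Longrightarrow> (x - ce c) * res x c = 1 \<and> res x c * (x - ce c) = 1"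
  unfolding res_def spectrum_ce using ainv by blast

lemma res_pos: "c \<notin> spectrum (x::'a::complex_banach_algebra) \<Longrightarrow> norm (res x c) > 0"
  using res[of c x] by (metis mult_zero_right zero_less_norm_iff zero_neq_one)

lemma res_local:
  fixes x :: "'a::complex_banach_algebra"
  assumes "c0 \<notin> spectrum x" "cmod (c - c0) * norm (res x c0) \<le> 1/2"
  shows "c \<notin> spectrum x \<and> norm (res x c) \<le> 2 * norm (res x c0)
     \<and> norm (res x c - res x c0) \<le> 2 * norm (res x c0)^2 * cmod (c - c0)"
proof -
  let ?R0 = "res x c0"
  have e: "x - ce c = (x - ce c0) + ce (c0 - c)" by (simp add: ce_diff)
  have P: "invertible_elem (x - ce c) \<and> norm (ainv (x - ce c)) \<le> 2 * norm ?R0"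
    unfolding e using pert[of "x - ce c0" ?R0 "ce (c0 - c)"] res[OF assms(1)] assms(2)
    by (simp add: norm_minus_commute)
  hence nc: "c \<notin> spectrum x" by (simp add: spectrum_ce)
  have R: "(x - ce c) * res x c = 1" "res x c * (x - ce c) = 1" using res[OF nc] by auto
  have R0: "(x - ce c0) * ?R0 = 1" "?R0 * (x - ce c0) = 1" using res[OF assms(1)] by auto
  have "res x c * ((x - ce c0) - (x - ce c)) * ?R0
      = res x c * ((x - ce c0) * ?R0) - (res x c * (x - ce c)) * ?R0"
    by (simp add: right_diff_distrib left_diff_distrib mult.assoc)
  hence "res x c - ?R0 = res x c * ((x - ce c0) - (x - ce c)) * ?R0" using R R0 by simp
  also have "\<dots> = res x c * ce (c - c0) * ?R0" by (simp add: ce_diff)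
  finally have eqR: "res x c - ?R0 = res x c * ce (c - c0) * ?R0" .
  have "norm (res x c - ?R0) \<le> norm (res x c) * cmod (c - c0) * norm ?R0"
  proof -
    have "norm (res x c * ce (c - c0) * ?R0) \<le> norm (res x c * ce (c - c0)) * norm ?R0"
      by (rule norm_mult_ineq)
    also have "\<dots> \<le> norm (res x c) * cmod (c - c0) * norm ?R0"
      by (intro mult_right_mono) (use norm_mult_ineq[of "res x c" "ce (c - c0)"] in auto)
    finally show ?thesis using eqR by simp
  qed
  also have "\<dots> \<le> (2 * norm ?R0) * cmod (c - c0) * norm ?R0"
    using P unfolding res_def by (intro mult_right_mono) auto
  finally show ?thesis using P nc unfolding res_def by (simp add: power2_eq_square mult_ac)
qed

lemma res_pert:
  fixes x x' :: "'a::complex_banach_algebra"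
  assumes "c \<notin> spectrum x" "norm (x' - x) * norm (res x c) \<le> 1/2"
  shows "c \<notin> spectrum x' \<and> norm (res x' c) \<le> 2 * norm (res x c)"
proof -
  have e: "x' - ce c = (x - ce c) + (x' - x)" by simp
  show ?thesis
    using pert[of "x - ce c" "res x c" "x' - x"] res[OF assms(1)] assms(2)
    unfolding spectrum_ce res_def[of x'] e by auto
qed

lemma spectrum_bounded: "c \<in> spectrum (x::'a::complex_banach_algebra) \<Longrightarrow> cmod c \<le> 2 * norm x"
proof (rule ccontr)
  assume c: "c \<in> spectrum x" "\<not> cmod c \<le> 2 * norm x"
  hence c0: "c \<noteq> 0" by auto
  have a1: "(- ce c) * ce (- inverse c) = (1::'a)"
    by (simp add: ce_minus ce_mult[symmetric] c0)
  have a2: "ce (- inverse c) * (- ce c) = (1::'a)"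
    by (simp add: ce_minus ce_mult[symmetric] c0)
  have cp: "cmod c > 0" using c0 by simp
  have "norm (ce (- inverse c)::'a) = 1 / cmod c" by (simp add: norm_inverse divide_inverse)
  moreover have "norm x * (1 / cmod c) \<le> 1/2" using c cp by (simp add: field_simps)
  ultimately have "norm x * norm (ce (- inverse c)::'a) \<le> 1/2" by simp
  then have "invertible_elem (- ce c + x)" using pert[OF a1 a2] by blast
  then show False using c by (simp add: spectrum_ce add.commute)
qed

lemma spectrum_open_compl: "open (- spectrum (x::'a::complex_banach_algebra))"
  unfolding open_dist
proof (intro ballI)
  fix c0 assume "c0 \<in> - spectrum x"
  hence c0: "c0 \<notin> spectrum x" by auto
  define r where "r = 1 / (2 * norm (res x c0))"
  have r: "r > 0" using res_pos[OF c0] by (simp add: r_def)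
  show "\<exists>e>0. \<forall>y. dist y c0 < e \<longrightarrow> y \<in> - spectrum x"
  proof (intro exI[of _ r] conjI allI impI r)
    fix c assume "dist c c0 < r"
    hence "cmod (c - c0) * norm (res x c0) \<le> 1/2"
      using res_pos[OF c0] by (simp add: dist_norm r_def field_simps)
    then show "c \<in> - spectrum x" using res_local[OF c0] by auto
  qed
qed

lemma spectrum_compact: "compact (spectrum (x::'a::complex_banach_algebra))"
proof -
  have "closed (spectrum x)" using spectrum_open_compl by (simp add: closed_def)
  moreover have "bounded (spectrum x)"
    unfolding bounded_iff using spectrum_bounded by blast
  ultimately show ?thesis using compact_eq_bounded_closed by blast
qed

lemma res_continuous: "continuous_on (- spectrum (x::'a::complex_banach_algebra)) (res x)"
  unfolding continuous_on_iff
proof (intro ballI allI impI)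
  fix c0 :: complex and e :: real assume c0': "c0 \<in> - spectrum x" and e: "e > 0"
  hence c0: "c0 \<notin> spectrum x" by auto
  let ?n = "norm (res x c0)"
  have n: "?n > 0" using res_pos[OF c0] .
  define d where "d = min (1 / (2 * ?n)) (e / (2 * ?n^2 + 1))"
  have pos2: "2 * ?n^2 + 1 > 0" by (simp add: add_nonneg_pos)
  hence d: "d > 0" using n e by (simp add: d_def)
  show "\<exists>d>0. \<forall>c\<in>- spectrum x. dist c c0 < d \<longrightarrow> dist (res x c) (res x c0) < e"
  proof (intro exI[of _ d] conjI ballI impI d)
    fix c assume "dist c c0 < d"
    hence h1: "cmod (c - c0) < 1 / (2 * ?n)" and h2: "cmod (c - c0) < e / (2 * ?n^2 + 1)"
      by (auto simp: d_def dist_norm)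
    have "cmod (c - c0) * ?n \<le> 1/2" using h1 n by (simp add: field_simps)
    hence "norm (res x c - res x c0) \<le> 2 * ?n^2 * cmod (c - c0)" using res_local[OF c0] by auto
    also have "\<dots> \<le> (2 * ?n^2 + 1) * cmod (c - c0)" by (intro mult_right_mono) auto
    also have "\<dots> < e" using h2 pos2 by (subst mult.commute) (simp only: pos_less_divide_eq)
    finally show "dist (res x c) (res x c0) < e" by (simp add: dist_norm)
  qed
qed

lemma spectrum_uminus: "spectrum (- x) = uminus ` spectrum (x::'a::complex_banach_algebra)"
proof -
  have inv_neg: "invertible_elem (- y) \<longleftrightarrow> invertible_elem (y::'a)" for y
  proof
    assume "invertible_elem (-y)"
    then obtain z where "-y*z=1" "z*(-y)=1" unfolding invertible_elem_def by blast
    then show "invertible_elem y" by (intro invertible_elemI[of y "-z"]) simp_all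
  next
    assume "invertible_elem y"
    then obtain z where "y*z=1" "z*y=1" unfolding invertible_elem_def by blast
    then show "invertible_elem (-y)" by (intro invertible_elemI[of "-y" "-z"]) simp_all
  qed
  have "c \<in> spectrum (- x) \<longleftrightarrow> - c \<in> spectrum x" for c
  proof -
    have eq: "- x - ce c = - (x - ce (- c))" by (simp add: ce_minus)
    show ?thesis by (simp only: spectrum_ce eq inv_neg)
  qed
  moreover have "c \<in> uminus ` A \<longleftrightarrow> - c \<in> A" for c :: complex and A
    by (auto intro: rev_image_eqI[of "-c"])
  ultimately show ?thesis by blast
qed


lemma res_series:
  fixes x :: "'a::complex_banach_algebra"
  assumes w: "w \<notin> spectrum x" and q: "cmod c * norm (res x w) < 1"
  shows "(\<lambda>k. ce (c^k) * res x w ^ Suc k) sums res x (w + c)"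
proof -
  define R0 where "R0 = res x w"
  define y where "y = x - ce w"
  have R0: "y * R0 = 1" "R0 * y = 1" using res[OF w] by (auto simp: R0_def y_def)
  define u where "u = ce c * R0"
  have nu: "norm u < 1" unfolding u_def
    using norm_mult_ineq[of "ce c" R0] q by (simp add: R0_def)
  define s where "s = (\<Sum>k. u^k)"
  have N: "(1 - u) * s = 1" "s * (1 - u) = 1"
    using neumann[of u] nu unfolding s_def by auto
  have su: "summable (\<lambda>k. u^k)"
    by (rule summable_comparison_test'[of "\<lambda>k. norm u ^ k"])
       (use nu norm_power_ineq in \<open>auto simp: summable_geometric\<close>)
  have e: "x - ce (w + c) = y * (1 - u)"
  proof -
    have "y * (ce c * R0) = ce c * (y * R0)" by (metis ce_comm mult.assoc)
    then show ?thesis unfolding u_def y_def using R0(1) unfolding y_def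
      by (simp add: ce_add right_diff_distrib)
  qed
  have i1: "(x - ce (w + c)) * (s * R0) = 1" unfolding e
  proof -
    have "y * (1 - u) * (s * R0) = y * ((1 - u) * s) * R0" by (simp only: mult.assoc)
    then show "y * (1 - u) * (s * R0) = 1" using N(1) R0 by simp
  qed
  have i2: "(s * R0) * (x - ce (w + c)) = 1" unfolding e
  proof -
    have "(s * R0) * (y * (1 - u)) = s * (R0 * y) * (1 - u)" by (simp only: mult.assoc)
    then show "(s * R0) * (y * (1 - u)) = 1" using N(2) R0 by simp
  qed
  have r: "res x (w + c) = s * R0" unfolding res_def using ainv_eq[OF i1 i2] .
  have "(\<lambda>k. u^k * R0) sums (s * R0)" unfolding s_def using su summable_sums sums_mult2 by blast
  moreover have "u^k * R0 = ce (c^k) * R0 ^ Suc k" for k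
  proof -
    have "u^k = ce c ^ k * R0 ^ k" unfolding u_def
      by (rule comm_power_mult) (simp add: ce_comm)
    then show ?thesis by (simp add: ce_power power_Suc2 mult.assoc power_commutes)
  qed
  ultimately show ?thesis by (simp add: r R0_def)
qed

lemma roots_sum:
  assumes "0 < k" "k < N"
  shows "(\<Sum>j<N. (exp (2 * of_real pi * \<i> / of_nat N) ^ j) ^ k) = 0"
proof -
  define \<omega> where "\<omega> = exp (2 * of_real pi * \<i> / of_nat N)"
  have N0: "N > 0" using assms by simp
  have wk: "\<omega> ^ k = exp (of_nat k * (2 * of_real pi * \<i> / of_nat N))"
    unfolding \<omega>_def by (rule exp_of_nat_mult[symmetric])
  have ne: "\<omega> ^ k \<noteq> 1"
  proof
    assume "\<omega> ^ k = 1"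
    then obtain n :: int where n: "2 * pi * real k / real N = of_int (2 * n) * pi"
      unfolding wk exp_eq_1 by (auto simp: field_simps)
    hence "real k = real_of_int n * real N" using N0 by (simp add: field_simps)
    hence "int k = n * int N" by (metis of_int_eq_iff of_int_mult of_int_of_nat_eq)
    moreover have "0 < int k" "int k < int N" using assms by auto
    ultimately show False
    proof (cases "n \<le> 0")
      case True
      then have "n * int N \<le> 0" using mult_nonpos_nonneg[of n "int N"] by simp
      then show False using \<open>int k = n * int N\<close> \<open>0 < int k\<close> by linarith
    next
      case False
      then have "int N \<le> n * int N" using mult_right_mono[of 1 n "int N"] by simp
      then show False using \<open>int k = n * int N\<close> \<open>int k < int N\<close> by linarith
    qed
  qed
  have wN: "\<omega> ^ N = 1"
  proof -
    have "\<omega> ^ N = exp (of_nat N * (2 * of_real pi * \<i> / of_nat N))"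
      unfolding \<omega>_def by (rule exp_of_nat_mult[symmetric])
    also have "\<dots> = exp (2 * of_real pi * \<i>)" using N0 by simp
    finally show ?thesis by simp
  qed
  have "(\<Sum>j<N. (\<omega> ^ j) ^ k) = (\<Sum>j<N. (\<omega> ^ k) ^ j)"
    by (simp add: power_mult[symmetric] mult.commute)
  also have "\<dots> = (1 - (\<omega> ^ k) ^ N) / (1 - \<omega> ^ k)" using ne by (simp add: sum_gp_strict)
  also have "(\<omega> ^ k) ^ N = 1" using wN by (metis power_mult mult.commute power_one)
  finally show ?thesis unfolding \<omega>_def by simp
qed

lemma norm_root: "cmod (exp (2 * of_real pi * \<i> / of_nat N)) = 1"
  by (simp add: norm_exp)


lemma norm_ce_mult: "norm (ce c * (y::'a::complex_banach_algebra)) = cmod c * norm y"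
  by (simp add: scaleC_ce[symmetric] norm_scaleC)

lemma key:
  fixes x :: "'a::complex_banach_algebra"
  assumes w: "w \<notin> spectrum x" and rho: "\<rho> > 0" "\<rho> * norm (res x w) \<le> 1/4"
    and bnd: "\<And>c. cmod c = \<rho> \<Longrightarrow> norm (res x (w + c)) \<le> norm (res x w)"
  shows "norm (res x w) \<le> norm (res x (w + complex_of_real \<rho>))"
proof -
  define R0 where "R0 = res x w"
  define n where "n = norm R0"
  define q where "q = \<rho> * n"
  have n0: "n \<ge> 0" by (simp add: n_def)
  have q0: "q \<ge> 0" "q \<le> 1/4" using rho n0 by (auto simp: q_def n_def R0_def)
  have step: "n - norm (res x (w + complex_of_real \<rho>)) \<le> real (Suc M) * n * (1/2)^(Suc M)" for M
  proof -
    define N where "N = Suc M"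
    define \<omega> where "\<omega> = exp (2 * of_real pi * \<i> / of_nat N)"
    define cj where "cj j = complex_of_real \<rho> * \<omega>^j" for j
    have ncj: "cmod (cj j) = \<rho>" for j
      using rho(1) norm_root[of N] by (simp add: cj_def norm_mult norm_power \<omega>_def)
    have ser: "(\<lambda>k. ce ((cj j)^k) * R0^Suc k) sums res x (w + cj j)" for j
      unfolding R0_def by (rule res_series[OF w]) (use ncj rho q0 in \<open>simp add: q_def n_def R0_def\<close>)
    define A where "A = (\<Sum>j<N. res x (w + cj j))"
    define t where "t k = ce (\<Sum>j<N. (cj j)^k) * R0^Suc k" for k
    have tA: "t sums A"
    proof -
      have "(\<lambda>k. \<Sum>j<N. ce ((cj j)^k) * R0^Suc k) sums A" unfolding A_def
        by (rule sums_sum) (rule ser)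
      moreover have "(\<Sum>j<N. ce ((cj j)^k) * R0^Suc k) = t k" for k
        unfolding t_def by (simp add: ce_sum sum_distrib_right)
      ultimately show ?thesis by simp
    qed
    have t0: "t 0 = ce (of_nat N) * R0" unfolding t_def by simp
    have tS: "(\<lambda>k. t (Suc k)) sums (A - ce (of_nat N) * R0)"
      using tA t0 sums_Suc_iff[of t] by simp
    define g where "g k = real N * n * (1/2)^N * ((1/2) * (1/2)^k)" for k
    have tb: "norm (t (Suc k)) \<le> g k" for k
    proof (cases "Suc k < N")
      case True
      have "(\<Sum>j<N. (cj j)^Suc k) = complex_of_real \<rho> ^ Suc k * (\<Sum>j<N. (\<omega> ^ j) ^ Suc k)"
        by (simp add: cj_def power_mult_distrib sum_distrib_left mult_ac)
      also have "\<dots> = 0" using roots_sum[of "Suc k" N] True unfolding \<omega>_def by simp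
      finally have "t (Suc k) = 0" unfolding t_def by simp
      then show ?thesis using n0 by (simp add: g_def)
    next
      case False
      have s1: "cmod (\<Sum>j<N. (cj j)^Suc k) \<le> real N * \<rho> ^ Suc k"
      proof -
        have "cmod (\<Sum>j<N. (cj j)^Suc k) \<le> (\<Sum>j<N. cmod ((cj j)^Suc k))" by (rule norm_sum)
        also have "\<dots> = real N * \<rho> ^ Suc k" by (simp only: norm_power ncj sum_constant card_lessThan of_nat_id)
        finally show ?thesis .
      qed
      have s2: "norm (R0 ^ Suc (Suc k)) \<le> n ^ Suc (Suc k)" unfolding n_def by (rule norm_power_ineq)
      have "norm (t (Suc k)) = cmod (\<Sum>j<N. (cj j)^Suc k) * norm (R0 ^ Suc (Suc k))"
        unfolding t_def by (rule norm_ce_mult)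
      also have "\<dots> \<le> (real N * \<rho> ^ Suc k) * n ^ Suc (Suc k)"
        by (rule mult_mono[OF s1 s2 _ norm_ge_zero]) (use rho(1) in simp)
      also have "\<dots> = real N * n * q ^ Suc k" by (simp add: q_def power_mult_distrib)
      finally have e1: "norm (t (Suc k)) \<le> real N * n * q ^ Suc k" .
      have "(2*q) ^ Suc k * (1/2) ^ Suc k = (2*q*(1/2)) ^ Suc k" by (rule power_mult_distrib[symmetric])
      hence e2: "q ^ Suc k = (2*q) ^ Suc k * (1/2) ^ Suc k" by simp
      have e3: "(2*q) ^ Suc k \<le> (1/2) ^ N"
      proof -
        have "(2*q) ^ Suc k \<le> (1/2) ^ Suc k" using q0 by (intro power_mono) auto
        also have "\<dots> \<le> (1/2) ^ N" using False by (intro power_decreasing) auto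
        finally show ?thesis .
      qed
      have "q ^ Suc k \<le> (1/2) ^ N * (1/2) ^ Suc k" unfolding e2
        by (rule mult_right_mono[OF e3]) simp
      hence "real N * n * q ^ Suc k \<le> real N * n * ((1/2) ^ N * (1/2) ^ Suc k)"
        by (rule mult_left_mono) (use n0 in simp)
      also have "\<dots> = g k" by (simp add: g_def)
      finally show ?thesis using e1 by linarith
    qed
    have gs: "g sums (real N * n * (1/2)^N)"
    proof -
      have "(\<lambda>k. (1/2::real)^k) sums 2" using geometric_sums[of "1/2::real"] by simp
      hence "(\<lambda>k. (real N * n * (1/2)^N) * ((1/2) * (1/2::real)^k)) sums ((real N * n * (1/2)^N) * ((1/2) * 2))"
        by (intro sums_mult) 
      moreover have "g = (\<lambda>k. (real N * n * (1/2)^N) * ((1/2) * (1/2::real)^k))"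
        by (rule ext) (simp add: g_def)
      ultimately show ?thesis by simp
    qed
    have nA: "norm (A - ce (of_nat N) * R0) \<le> real N * n * (1/2)^N"
    proof -
      have "norm (\<Sum>k. t (Suc k)) \<le> (\<Sum>k. g k)"
        by (rule norm_suminf_le) (use tb gs sums_summable in auto)
      then show ?thesis using sums_unique[OF tS] sums_unique[OF gs] by simp
    qed
    have nN: "norm (ce (of_nat N) * R0) = real N * n" by (simp add: norm_ce_mult n_def)
    have sA: "norm A \<le> norm (res x (w + complex_of_real \<rho>)) + real M * n"
    proof -
      have "norm A \<le> (\<Sum>j<N. norm (res x (w + cj j)))" unfolding A_def by (rule norm_sum)
      also have "\<dots> = norm (res x (w + cj 0)) + (\<Sum>j<M. norm (res x (w + cj (Suc j))))"
        unfolding N_def by (rule sum.lessThan_Suc_shift)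
      also have "(\<Sum>j<M. norm (res x (w + cj (Suc j)))) \<le> real M * n"
        using sum_bounded_above[of "{..<M}" "\<lambda>j. norm (res x (w + cj (Suc j)))" n] bnd ncj
        by (simp add: n_def R0_def)
      finally show ?thesis by (simp add: cj_def)
    qed
    have "real N * n \<le> norm A + norm (A - ce (of_nat N) * R0)"
      using norm_triangle_ineq4[of A "A - ce (of_nat N) * R0"] nN by simp
    then show ?thesis using nA sA by (simp add: N_def algebra_simps)
  qed
  have "(\<lambda>M. real (Suc M) * (1/2::real)^(Suc M)) \<longlonglongrightarrow> 0" by real_asymp
  hence lim: "(\<lambda>M. real (Suc M) * n * (1/2)^(Suc M)) \<longlonglongrightarrow> 0"
    using tendsto_mult_right_zero[of _ sequentially n] by (simp add: mult_ac)
  have "n - norm (res x (w + complex_of_real \<rho>)) \<le> 0"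
    using LIMSEQ_le_const[OF lim] step by blast
  then show ?thesis by (simp add: n_def R0_def)
qed


lemma maxp:
  fixes x :: "'a::complex_banach_algebra"
  assumes K: "compact K" "K \<noteq> {}" "K \<inter> spectrum x = {}" and G: "open G" "G \<subseteq> K"
  shows "\<exists>w\<in>K - G. \<forall>z\<in>K. norm (res x z) \<le> norm (res x w)"
proof -
  define f where "f z = norm (res x z)" for z
  have cf: "continuous_on K f" unfolding f_def
    by (intro continuous_on_norm continuous_on_subset[OF res_continuous]) (use K in auto)
  obtain z0 where z0: "z0 \<in> K" "\<forall>z\<in>K. f z \<le> f z0"
    using continuous_attains_sup[OF K(1) K(2) cf] by blast
  define Mx where "Mx = {z \<in> K. f z = f z0}"
  have "closedin (top_of_set K) Mx" unfolding Mx_def by (rule continuous_closedin_preimage_constant[OF cf])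
  hence cM: "compact Mx" using K(1) closedin_compact by blast
  have neM: "Mx \<noteq> {}" using z0 by (auto simp: Mx_def)
  have cRe: "continuous_on Mx Re" by (intro continuous_intros)
  obtain w where w: "w \<in> Mx" "\<forall>z\<in>Mx. Re z \<le> Re w"
    using continuous_attains_sup[OF cM neM cRe] by blast
  have wK: "w \<in> K" and fw: "f w = f z0" using w by (auto simp: Mx_def)
  have wns: "w \<notin> spectrum x" using wK K(3) by blast
  have "w \<notin> G"
  proof
    assume "w \<in> G"
    then obtain r where r: "r > 0" "ball w r \<subseteq> G" using G(1) open_contains_ball by blast
    have np: "f w > 0" unfolding f_def using res_pos[OF wns] .
    define \<rho> where "\<rho> = min (r/2) (1 / (4 * f w))"
    have rp: "\<rho> > 0" using r np by (simp add: \<rho>_def)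
    have rr: "\<rho> < r" using r by (simp add: \<rho>_def)
    have rq: "\<rho> * norm (res x w) \<le> 1/4"
    proof -
      have "\<rho> * f w \<le> (1 / (4 * f w)) * f w" using np by (intro mult_right_mono) (auto simp: \<rho>_def)
      also have "\<dots> = 1/4" using np by simp
      finally show ?thesis by (simp add: f_def)
    qed
    have inK: "w + c \<in> K" if "cmod c \<le> \<rho>" for c
    proof -
      have "w + c \<in> ball w r" using that rr by (simp add: dist_norm)
      then show ?thesis using r G(2) by blast
    qed
    have "norm (res x w) \<le> norm (res x (w + complex_of_real \<rho>))"
    proof (rule key[OF wns rp rq])
      fix c assume "cmod c = \<rho>"
      then have "w + c \<in> K" using inK by simp
      then show "norm (res x (w + c)) \<le> norm (res x w)" using z0 fw by (simp add: f_def)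
    qed
    moreover have wr: "w + complex_of_real \<rho> \<in> K" using inK rp by simp
    ultimately have "w + complex_of_real \<rho> \<in> Mx" using z0 fw by (force simp: Mx_def f_def)
    then have "Re (w + complex_of_real \<rho>) \<le> Re w" using w by blast
    then show False using rp by simp
  qed
  then have "w \<in> K - G" using wK by blast
  moreover have "\<forall>z\<in>K. norm (res x z) \<le> norm (res x w)" using z0 fw by (simp add: f_def)
  ultimately show ?thesis by blast
qed


lemma cc_eq: "connected_component_of_set (top_of_set S) z = connected_component_set S z"
  by (auto simp: connected_component_of_def connected_component_def connectedin_subtopology)

lemma topo_sep:
  fixes S B :: "'a::euclidean_space set"
  assumes "compact S" "z \<in> S" "closed B" "connected_component_set S z \<inter> B = {}"
  shows "\<exists>C. C \<subseteq> S \<and> z \<in> C \<and> compact C \<and> compact (S - C) \<and> C \<inter> B = {}"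
proof -
  let ?X = "top_of_set S"
  have "connected_component_set S z \<in> connected_components_of ?X"
    using assms(2) unfolding connected_components_of_def by (auto simp: cc_eq[symmetric])
  moreover have "compactin ?X (connected_component_set S z)"
  proof -
    have "closed (connected_component_set S z)"
      using assms(1) closed_connected_component compact_imp_closed by blast
    moreover have "connected_component_set S z \<subseteq> S" by (rule connected_component_subset)
    ultimately have "compact (connected_component_set S z)"
      using assms(1) compact_Int_closed inf.absorb2 by metis
    then show ?thesis using \<open>connected_component_set S z \<subseteq> S\<close> by (simp add: compactin_subtopology)
  qed
  moreover have "closedin ?X (S \<inter> B)"
    using assms(3) closedin_closed_Int by blast
  moreover have "disjnt (connected_component_set S z) (S \<inter> B)"
    using assms(4) by (auto simp: disjnt_def)
  moreover have "locally_compact_space ?X"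
    by (simp add: assms(1) compact_imp_locally_compact_space compact_space_subtopology)
  moreover have "Hausdorff_space ?X"
    by (simp add: Hausdorff_space_subtopology)
  ultimately have "separated_between ?X (connected_component_set S z) (S \<inter> B)"
    using separated_between_compact_connected_component by blast
  then obtain U V where UV: "openin ?X U" "openin ?X V" "U \<union> V = S" "disjnt U V"
      "connected_component_set S z \<subseteq> U" "S \<inter> B \<subseteq> V"
    unfolding separated_between_def by auto
  have "U = S - V" using UV by (auto simp: disjnt_def)
  have "closedin ?X U" unfolding \<open>U = S - V\<close>
    using UV(2) openin_closedin_eq by fastforce
  hence cU: "compact U" using assms(1) closedin_compact by blast
  have "V = S - U" using UV by (auto simp: disjnt_def)
  have "closedin ?X V" unfolding \<open>V = S - U\<close>
    using UV(1) openin_closedin_eq by fastforce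
  hence cV: "compact V" using assms(1) closedin_compact by blast
  have "S - U = V" using UV by (auto simp: disjnt_def)
  moreover have "z \<in> U" using UV(5) assms(2) by auto
  moreover have "U \<inter> B = {}" using UV by (auto simp: disjnt_def)
  ultimately show ?thesis using cU cV UV(3) by (intro exI[of _ U]) auto
qed

theorem proposition4p08:
  fixes a :: "'a::complex_banach_algebra" and b :: "nat \<Rightarrow> 'a"
  assumes "b \<longlonglongrightarrow> a"
    and "\<And>n. n \<ge> 1 \<Longrightarrow>
           \<forall>z\<in>spectrum (b n). connected_component_set (spectrum (b n)) z \<inter> spectrum (- b n) \<noteq> {}"
  shows "\<forall>z\<in>spectrum a. connected_component_set (spectrum a) z \<inter> spectrum (- a) \<noteq> {}"
proof (intro ballI)
  fix z assume zS: "z \<in> spectrum a"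
  define S where "S = spectrum a"
  have cS: "compact S" unfolding S_def by (rule spectrum_compact)
  have cmS: "compact (uminus ` S)" using compact_negations[OF cS] by simp
  show "connected_component_set (spectrum a) z \<inter> spectrum (- a) \<noteq> {}"
  proof
    assume disj: "connected_component_set (spectrum a) z \<inter> spectrum (- a) = {}"
    obtain C where C: "C \<subseteq> S" "z \<in> C" "compact C" "compact (S - C)" "C \<inter> uminus ` S = {}"
      using topo_sep[OF cS _ compact_imp_closed[OF cmS]] zS disj
      unfolding S_def spectrum_uminus by blast
    define T where "T = (S - C) \<union> uminus ` S"
    have cT: "compact T" unfolding T_def using C(4) cmS by blast
    have neT: "T \<noteq> {}" using zS by (auto simp: T_def S_def)
    have CT: "C \<inter> T = {}" using C(5) by (auto simp: T_def)
    have neC: "C \<noteq> {}" using C(2) by blast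
    have clC: "closed C" using C(3) compact_imp_closed by blast
    have cinf: "continuous_on A (\<lambda>w. infdist w C)" for A
      by (intro continuous_intros)
    obtain t0 where t0: "t0 \<in> T" "\<forall>t\<in>T. infdist t0 C \<le> infdist t C"
      using continuous_attains_inf[OF cT neT cinf] by blast
    have mpos: "infdist t0 C > 0"
      using infdist_pos_not_in_closed[OF clC neC] t0(1) CT by blast
    define \<delta> where "\<delta> = infdist t0 C / 3"
    have dpos: "\<delta> > 0" using mpos by (simp add: \<delta>_def)
    have hT: "\<And>t. t \<in> T \<Longrightarrow> infdist t C \<ge> 3 * \<delta>" using t0 by (simp add: \<delta>_def)
    define G where "G = {w. infdist w C < \<delta>}"
    define Gc where "Gc = {w. infdist w C \<le> \<delta>}"
    define Bd where "Bd = {w. infdist w C = \<delta>}"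
    have oG: "open G" unfolding G_def by (intro open_Collect_less cinf continuous_intros)
    have cGc: "compact Gc" unfolding Gc_def
      by (rule compact_infdist_le[OF neC C(3) dpos])
    have clBd: "closed Bd" unfolding Bd_def by (intro closed_Collect_eq cinf continuous_intros)
    have BdGc: "Bd \<subseteq> Gc" "G \<subseteq> Gc" "Gc = G \<union> Bd" by (auto simp: Bd_def Gc_def G_def)
    have cBd: "compact Bd" using closed_Int_compact[OF clBd cGc] BdGc by (simp add: Int_absorb2)
    have zG: "z \<in> G" using C(2) dpos by (simp add: G_def)
    have F1: "Bd \<inter> S = {}"
    proof (rule ccontr)
      assume "Bd \<inter> S \<noteq> {}"
      then obtain w where w: "w \<in> Bd" "w \<in> S" by blast
      show False
      proof (cases "w \<in> C")
        case True then show False using w dpos by (simp add: Bd_def)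
      next
        case False then have "w \<in> T" using w by (simp add: T_def)
        then show False using hT[of w] w dpos by (simp add: Bd_def)
      qed
    qed
    have F2: "- w \<notin> S" if "w \<in> Gc" for w
    proof
      assume "- w \<in> S"
      then have "w \<in> T" unfolding T_def by (auto intro: rev_image_eqI[of "-w"])
      then show False using hT[of w] that dpos by (simp add: Gc_def)
    qed
    define Q where "Q = Bd \<union> uminus ` Gc"
    have cQ: "compact Q" unfolding Q_def using cBd compact_negations[OF cGc] by auto
    have QS: "Q \<inter> spectrum a = {}" using F1 F2 unfolding Q_def S_def by auto
    have "compact (res a ` Q)"
      by (rule compact_continuous_image[OF continuous_on_subset[OF res_continuous] cQ]) (use QS in auto)
    then obtain B where B: "B > 0" "\<forall>q\<in>Q. norm (res a q) \<le> B"
      using compact_imp_bounded bounded_pos by (metis image_eqI)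
    obtain N0 where N0: "\<forall>n\<ge>N0. norm (b n - a) < 1 / (4 * B)"
    proof -
      have "1 / (4 * B) > 0" using B(1) by simp
      then show ?thesis using assms(1) that unfolding LIMSEQ_iff by blast
    qed
    define n where "n = Suc N0"
    have hb: "norm (b n - a) < 1 / (4 * B)" using N0 by (simp add: n_def)
    have hb': "norm (b n - a) * (4 * B) < 1" using hb B(1) by (simp add: field_simps)
    have Qb: "q \<notin> spectrum (b n) \<and> norm (res (b n) q) \<le> 2 * B" if "q \<in> Q" for q
    proof -
      have qa: "q \<notin> spectrum a" using QS that by blast
      have "norm (b n - a) * norm (res a q) \<le> norm (b n - a) * B"
        using B(2) that by (intro mult_left_mono) auto
      also have "\<dots> \<le> 1/2" using hb' B(1) by (simp add: field_simps)
      finally have "norm (b n - a) * norm (res a q) \<le> 1/2" .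
      from res_pert[OF qa this] show ?thesis using B(2) that by force
    qed
    obtain \<mu> where mu: "\<mu> \<in> G" "\<mu> \<in> spectrum (b n)"
    proof (rule ccontr)
      assume "\<not> thesis"
      hence nG: "G \<inter> spectrum (b n) = {}" using that by blast
      have "Gc \<inter> spectrum (b n) = {}" using nG Qb BdGc(3) unfolding Q_def by blast
      moreover have "Gc \<noteq> {}" using zG BdGc by blast
      ultimately obtain w where w: "w \<in> Gc - G" "\<forall>z'\<in>Gc. norm (res (b n) z') \<le> norm (res (b n) w)"
        using maxp[OF cGc _ _ oG BdGc(2)] by blast
      have "w \<in> Q" using w(1) BdGc(3) unfolding Q_def by blast
      hence "norm (res (b n) w) \<le> 2 * B" using Qb by blast
      hence zb: "norm (res (b n) z) \<le> 2 * B" using w(2) zG BdGc(2) by force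
      have zbn: "z \<notin> spectrum (b n)" using nG zG by blast
      have "norm (a - b n) * norm (res (b n) z) \<le> norm (a - b n) * (2 * B)"
        using zb by (intro mult_left_mono) auto
      also have "\<dots> \<le> 1/2" using hb' B(1) by (simp add: field_simps norm_minus_commute)
      finally have "norm (a - b n) * norm (res (b n) z) \<le> 1/2" .
      from res_pert[OF zbn this] have "z \<notin> spectrum a" by blast
      then show False using zS by blast
    qed
    have "n \<ge> 1" by (simp add: n_def)
    from assms(2)[OF this] mu(2) obtain \<nu> where
      nu: "\<nu> \<in> connected_component_set (spectrum (b n)) \<mu>" "\<nu> \<in> spectrum (- b n)" by blast
    define Kn where "Kn = connected_component_set (spectrum (b n)) \<mu>"
    have Kc: "connected Kn" unfolding Kn_def by (rule connected_connected_component)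
    have Ksub: "Kn \<subseteq> spectrum (b n)" unfolding Kn_def by (rule connected_component_subset)
    have muK: "\<mu> \<in> Kn" unfolding Kn_def using mu(2) by simp
    have nuK: "\<nu> \<in> Kn" using nu(1) by (simp add: Kn_def)
    have hc: "connected ((\<lambda>w. infdist w C) ` Kn)"
      by (rule connected_continuous_image[OF cinf Kc])
    have BdK: "infdist v C \<noteq> \<delta>" if "v \<in> Kn" for v
    proof
      assume "infdist v C = \<delta>"
      then have "v \<in> Q" by (simp add: Q_def Bd_def)
      then show False using Qb Ksub that by blast
    qed
    have "infdist \<nu> C < \<delta>"
    proof (rule ccontr)
      assume "\<not> infdist \<nu> C < \<delta>"
      moreover have "infdist \<nu> C \<noteq> \<delta>" using BdK nuK by blast
      ultimately have "infdist \<mu> C \<le> \<delta>" "\<delta> \<le> infdist \<nu> C" using mu(1) by (auto simp: G_def)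
      then have "\<delta> \<in> (\<lambda>w. infdist w C) ` Kn"
        using hc muK nuK unfolding connected_iff_interval by blast
      then show False using BdK by auto
    qed
    hence "\<nu> \<in> Gc" by (simp add: Gc_def)
    hence "- \<nu> \<in> Q" unfolding Q_def by blast
    hence "- \<nu> \<notin> spectrum (b n)" using Qb by blast
    moreover have "- \<nu> \<in> spectrum (b n)" using nu(2) unfolding spectrum_uminus by auto
    ultimately show False by blast
  qed
qed

end
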